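(* Let $k\ge3$ and $d$ a positive integer, and let $z^*$ be the minimal spike of degree $(k-2)(2^d-1)$. If $d>\delta(k-2)$, then $\omega_i(z^* )=k-2$ for $1\le i\le d-\delta(k-2)$ and $\omega_i(z^* )<k-2$ for $i>d-\delta(k-2)$.
   Context: For a positive integer $a$, $\alpha(a)$ is the number of ones in its binary expansion, $\zeta(a)$ is the largest $u$ with $2^u\mid a$, and $\delta(a)=a-\alpha(a)-\zeta(a)$. For a monomial $x=x_1^{a_1}\cdots x_k^{a_k}$, $\omega_i(x)=\sum_j\alpha_{i-1}(a_j)$ where $\alpha_r(a)$ is the $r$-th binary digit of $a$. For a positive integer $n$, $\mu(n)$ is the least $r$ with $n=\sum_{i=1}^r(2^{u_i}-1)$, $u_i>0$; if $\mu(n)=s$ then $n=\sum_{i=1}^s(2^{e_i}-1)$ for unique integers $e_1>e_2>\dots>e_{s-1}\ge e_s>0$, and the minimal spike of degree $n$ is $\prod_{i=1}^sx_i^{2^{e_i}-1}$. *)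

theory Defs
  imports Main
begin

definition bin_digit :: "nat \<Rightarrow> nat \<Rightarrow> nat" where
  "bin_digit r a = (a div 2 ^ r) mod 2"

fun alpha :: "nat \<Rightarrow> nat" where
  "alpha a = (if a = 0 then 0 else a mod 2 + alpha (a div 2))"

declare alpha.simps[simp del]

text \<open>zeta(a): largest u with 2^u dividing a (a positive).\<close>
definition zeta :: "nat \<Rightarrow> nat" where
  "zeta a = (GREATEST u. 2 ^ u dvd a)"

definition delta :: "nat \<Rightarrow> int" where
  "delta a = int a - int (alpha a) - int (zeta a)"

text \<open>A monomial x_1^{a_1} ... x_k^{a_k} is represented by its exponent list [a_1,...,a_k].
  omega_i(x) = sum_j alpha_{i-1}(a_j).\<close>
definition omega :: "nat \<Rightarrow> nat list \<Rightarrow> nat" where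
  "omega i x = (\<Sum>a\<leftarrow>x. bin_digit (i - 1) a)"

definition mu :: "nat \<Rightarrow> nat" where
  "mu n = (LEAST r. \<exists>us :: nat list. length us = r \<and> (\<forall>u\<in>set us. u > 0)
                      \<and> (\<Sum>u\<leftarrow>us. 2 ^ u - 1) = n)"

text \<open>The exponents e_1 > e_2 > ... > e_{s-1} >= e_s > 0, s = mu(n), with
  n = sum (2^{e_i} - 1); listed as [e_1, ..., e_s].\<close>
definition spike_exps :: "nat \<Rightarrow> nat list" where
  "spike_exps n = (THE es. length es = mu n \<and> (\<forall>e\<in>set es. e > 0)
      \<and> (\<forall>i. i + 2 < length es \<longrightarrow> es ! i > es ! (i + 1))
      \<and> (2 \<le> length es \<longrightarrow> es ! (length es - 2) \<ge> es ! (length es - 1))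
      \<and> (\<Sum>e\<leftarrow>es. 2 ^ e - 1) = n)"

text \<open>The minimal spike of degree n, as the exponent list of prod_{i=1}^s x_i^{2^{e_i}-1}.\<close>
definition minimal_spike :: "nat \<Rightarrow> nat list" where
  "minimal_spike n = map (\<lambda>e. 2 ^ e - 1) (spike_exps n)"

end

theory Submission
  imports Defs
begin
lemma alpha_0[simp]: "alpha 0 = 0" by (simp add: alpha.simps)

lemma alpha_2: "b < 2 \<Longrightarrow> alpha (2*q+b) = b + alpha q"
proof (cases "2*q+b = 0")
  case True thus ?thesis by simp
next
  case False
  assume "b < 2"
  hence "(2*q+b) mod 2 = b" "(2*q+b) div 2 = q" by auto
  thus ?thesis using False by (subst alpha.simps) simp
qed

lemma alpha_double[simp]: "alpha (2*q) = alpha q"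
  using alpha_2[of 0 q] by simp

lemma alpha_pow_mult: "alpha (2^j * q) = alpha q"
  by (induction j) (simp_all add: mult.assoc)

lemma alpha_le: "alpha x \<le> x"
proof (induction x rule: less_induct)
  case (less x)
  show ?case
  proof (cases "x = 0")
    case True thus ?thesis by simp
  next
    case False
    have "alpha x = x mod 2 + alpha (x div 2)" using False by (subst alpha.simps) simp
    moreover have "alpha (x div 2) \<le> x div 2" using less False by simp
    ultimately show ?thesis by simp
  qed
qed

lemma zeta_char: "odd q \<Longrightarrow> zeta (2^j * q) = j"
  unfolding zeta_def
proof (rule Greatest_equality)
  show "2^j dvd 2^j * q" by simp
next
  fix u assume oq: "odd q" and h: "2^u dvd (2::nat)^j * q"
  show "u \<le> j"
  proof (rule ccontr)
    assume "\<not> u \<le> j"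
    hence "2^(Suc j) dvd (2::nat)^u" by (intro le_imp_power_dvd) simp
    hence "2^(Suc j) dvd (2::nat)^j * q" using h dvd_trans by blast
    hence "2^j * 2 dvd (2::nat)^j * q" by simp
    hence "2 dvd q" using nat_mult_dvd_cancel_disj by simp
    thus False using oq by simp
  qed
qed

lemma decomp: "x > 0 \<Longrightarrow> \<exists>j q. odd q \<and> x = 2^j * (q::nat)"
proof (induction x rule: less_induct)
  case (less x)
  show ?case
  proof (cases "odd x")
    case True thus ?thesis by (rule_tac x=0 in exI) auto
  next
    case False
    then obtain y where y: "x = 2*y" by auto
    with less have "y > 0" "y < x" by auto
    then obtain j q where "odd q" "y = 2^j*q" using less by blast
    thus ?thesis using y by (rule_tac x="Suc j" in exI) auto
  qed
qed

lemma alpha_pred_odd: "odd q \<Longrightarrow> alpha (2^j*q - 1) + 1 = alpha q + j"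
proof (induction j)
  case 0
  then obtain r where r: "q = 2*r+1" using oddE by blast
  thus ?case using alpha_2[of 1 r] by simp
next
  case (Suc j)
  have "q \<ge> 1" using Suc.prems by (cases q) auto
  hence "2^j*q \<ge> 1" by (simp add: Suc_leI)
  moreover have "(2::nat)^Suc j * q = 2*(2^j*q)" by simp
  ultimately have "2^Suc j * q - 1 = 2*(2^j*q - 1) + 1" by linarith
  thus ?case using alpha_2[of 1 "2^j*q - 1"] Suc by simp
qed

lemma alpha_pred: "x > 0 \<Longrightarrow> alpha (x - 1) + 1 = alpha x + zeta x"
proof -
  assume "x > 0"
  then obtain j q where "odd q" "x = 2^j*q" using decomp by blast
  thus ?thesis using alpha_pred_odd zeta_char alpha_pow_mult by simp
qed

lemma alpha_sub: "1 \<le> t \<Longrightarrow> t \<le> x \<Longrightarrow> alpha (x - t) + t \<ge> alpha x + zeta x"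
proof (induction t)
  case 0 thus ?case by simp
next
  case (Suc t)
  show ?case
  proof (cases "t = 0")
    case True thus ?thesis using alpha_pred[of x] Suc by simp
  next
    case False
    hence ih: "alpha (x - t) + t \<ge> alpha x + zeta x" using Suc by simp
    have "x - t > 0" using Suc by simp
    hence "alpha (x - t - 1) + 1 \<ge> alpha (x - t)" using alpha_pred[of "x - t"] by simp
    thus ?thesis using ih by simp
  qed
qed

lemma alpha_add_pow: "alpha (a + 2^u) \<le> alpha a + 1"
proof (induction u arbitrary: a)
  case 0
  have "alpha (a+1 - 1) + 1 = alpha (a+1) + zeta (a+1)" using alpha_pred[of "a+1"] by simp
  thus ?case by simp
next
  case (Suc v)
  obtain q b where qb: "a = 2*q+b" "b < 2" by (metis div_mult_mod_eq mod_less_divisor zero_less_numeral mult.commute)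
  have "a + 2^Suc v = 2*(q+2^v) + b" using qb by simp
  hence "alpha (a + 2^Suc v) = alpha (2*(q+2^v) + b)" by (simp only:)
  also have "\<dots> = b + alpha (q + 2^v)" using alpha_2 qb by blast
  finally have "alpha (a + 2^Suc v) = b + alpha (q + 2^v)" .
  also have "\<dots> \<le> b + alpha q + 1" using Suc by simp
  also have "\<dots> = alpha a + 1" using alpha_2 qb by simp
  finally show ?case .
qed

lemma alpha_sum_pow: "alpha (\<Sum>u\<leftarrow>us. 2^u) \<le> length us"
proof (induction us)
  case Nil thus ?case by simp
next
  case (Cons u us)
  have "alpha ((\<Sum>u\<leftarrow>us. 2^u) + 2^u) \<le> alpha (\<Sum>u\<leftarrow>us. 2^u) + 1" by (rule alpha_add_pow)
  thus ?case using Cons by (simp add: add.commute)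
qed

lemma sum_pow_minus: "(\<Sum>e\<leftarrow>xs. 2^e - 1) + length xs = (\<Sum>e\<leftarrow>xs. (2::nat)^e)"
  by (induction xs) (simp_all add: Suc_leI)

fun shp :: "nat list \<Rightarrow> bool" where
  "shp [] = True" | "shp [x] = True" | "shp [x,y] = (y \<le> x)"
| "shp (x#y#z#r) = (y < x \<and> shp (y#z#r))"

lemma shp_tail: "shp (x#t) \<Longrightarrow> shp t"
  by (cases t rule: shp.cases) auto

lemma shp_bound: "shp (x#t) \<Longrightarrow> (\<Sum>e\<leftarrow>x#t. (2::nat)^e) \<le> 2^(Suc x)"
proof (induction t arbitrary: x)
  case Nil thus ?case by simp
next
  case (Cons y r)
  show ?case
  proof (cases r)
    case Nil
    hence "y \<le> x" using Cons by simp
    hence "(2::nat)^y \<le> 2^x" by simp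
    thus ?thesis using Nil by simp
  next
    case (Cons z r')
    hence "y < x" "shp (y#r)" using Cons.prems by auto
    hence "(\<Sum>e\<leftarrow>y#r. (2::nat)^e) \<le> 2^(Suc y)" using Cons.IH by blast
    moreover have "(2::nat)^(Suc y) \<le> 2^x" using \<open>y < x\<close> by (simp del: power_Suc)
    ultimately show ?thesis by simp
  qed
qed

lemma shp_aux: "shp (h#t) \<Longrightarrow> shp (g#s) \<Longrightarrow> g < h \<Longrightarrow> length t = length s
  \<Longrightarrow> (\<Sum>e\<leftarrow>h#t. (2::nat)^e) = (\<Sum>e\<leftarrow>g#s. 2^e) \<Longrightarrow> False"
proof -
  assume a: "shp (h#t)" "shp (g#s)" "g < h" "length t = length s"
    "(\<Sum>e\<leftarrow>h#t. (2::nat)^e) = (\<Sum>e\<leftarrow>g#s. 2^e)"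
  have "(\<Sum>e\<leftarrow>g#s. (2::nat)^e) \<le> 2^(Suc g)" using shp_bound a by blast
  also have "(2::nat)^(Suc g) \<le> 2^h" using a(3) by (simp del: power_Suc)
  finally have c1: "2^g + (\<Sum>e\<leftarrow>s. (2::nat)^e) \<le> 2^h" by simp
  have c2: "2^h + (\<Sum>e\<leftarrow>t. (2::nat)^e) = 2^g + (\<Sum>e\<leftarrow>s. (2::nat)^e)" using a(5) by simp
  have "(\<Sum>e\<leftarrow>t. (2::nat)^e) = 0" using c1 c2 by linarith
  hence "length t = 0" using sum_pow_minus[of t] by simp
  hence "t = []" "s = []" using a(4) by auto
  thus False using a(3,5) by simp
qed

lemma shp_unique: "shp xs \<Longrightarrow> shp ys \<Longrightarrow> length xs = length ys
  \<Longrightarrow> (\<Sum>e\<leftarrow>xs. (2::nat)^e) = (\<Sum>e\<leftarrow>ys. 2^e) \<Longrightarrow> xs = ys"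
proof (induction xs arbitrary: ys)
  case Nil thus ?case by simp
next
  case (Cons h t)
  then obtain g s where ys: "ys = g#s" by (cases ys) auto
  have "g = h"
  proof (rule ccontr)
    assume "g \<noteq> h"
    hence "g < h \<or> h < g" by auto
    thus False
    proof
      assume "g < h" thus False using shp_aux[of h t g s] Cons ys by auto
    next
      assume "h < g" thus False using shp_aux[of g s h t] Cons ys by auto
    qed
  qed
  moreover have "t = s" using Cons ys \<open>g = h\<close> shp_tail by auto
  ultimately show ?case using ys by simp
qed

definition nthc :: "nat list \<Rightarrow> bool" where
 "nthc es = ((\<forall>i. i + 2 < length es \<longrightarrow> es ! i > es ! (i + 1))
      \<and> (2 \<le> length es \<longrightarrow> es ! (length es - 2) \<ge> es ! (length es - 1)))"

lemma nthc_shp: "nthc es \<Longrightarrow> shp es"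
proof (induction es rule: shp.induct)
  case (3 x y) thus ?case by (simp add: nthc_def)
next
  case (4 x y z r)
  have "y < x" using "4.prems" unfolding nthc_def by force
  moreover have "nthc (y#z#r)"
    unfolding nthc_def
  proof (intro conjI allI impI)
    fix i assume "i + 2 < length (y#z#r)"
    hence "Suc i + 2 < length (x#y#z#r)" by simp
    hence "(x#y#z#r) ! Suc i > (x#y#z#r) ! (Suc i + 1)" using "4.prems" unfolding nthc_def by blast
    thus "(y#z#r) ! i > (y#z#r) ! (i+1)" by simp
  next
    have "(x#y#z#r) ! (length (x#y#z#r) - 2) \<ge> (x#y#z#r) ! (length (x#y#z#r) - 1)"
      using "4.prems" unfolding nthc_def by simp
    thus "(y#z#r) ! (length (y#z#r) - 2) \<ge> (y#z#r) ! (length (y#z#r) - 1)"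
      by (simp add: nth_Cons')
  qed
  ultimately show ?case using 4 by simp
qed auto

fun bl :: "nat \<Rightarrow> nat list" where
  "bl x = (if x = 0 then [] else (if odd x then [0] else []) @ map Suc (bl (x div 2)))"
declare bl.simps[simp del]

lemma sum_map_Suc: "(\<Sum>e\<leftarrow>map Suc xs. (2::nat)^e) = 2 * (\<Sum>e\<leftarrow>xs. 2^e)"
  by (induction xs) auto

lemma bl_props: "(\<Sum>e\<leftarrow>bl x. (2::nat)^e) = x \<and> length (bl x) = alpha x \<and> sorted_wrt (<) (bl x)"
proof (induction x rule: less_induct)
  case (less x)
  show ?case
  proof (cases "x = 0")
    case True thus ?thesis by (simp add: bl.simps)
  next
    case False
    have ih: "(\<Sum>e\<leftarrow>bl (x div 2). (2::nat)^e) = x div 2 \<and> length (bl (x div 2)) = alpha (x div 2)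
       \<and> sorted_wrt (<) (bl (x div 2))" using less False by simp
    have bx: "bl x = (if odd x then [0] else []) @ map Suc (bl (x div 2))" using False by (subst bl.simps) simp
    have ax: "alpha x = x mod 2 + alpha (x div 2)" using False by (subst alpha.simps) simp
    have s: "sorted_wrt (<) (map Suc (bl (x div 2)))" using ih by (simp add: sorted_wrt_map)
    show ?thesis
    proof (cases "odd x")
      case True
      have "x = 2*(x div 2) + 1" using True by presburger
      hence "(\<Sum>e\<leftarrow>bl x. (2::nat)^e) = x" using bx ih True sum_map_Suc by simp
      moreover have "sorted_wrt (<) (bl x)" using bx True s by (simp add: sorted_wrt_append)
      ultimately show ?thesis using bx ax ih True by (simp add: odd_iff_mod_2_eq_one)
    next
      case False
      have "x = 2*(x div 2)" using False by presburger
      hence "(\<Sum>e\<leftarrow>bl x. (2::nat)^e) = x" using bx ih False sum_map_Suc by simp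
      thus ?thesis using bx ax ih False s by (simp add: even_iff_mod_2_eq_zero)
    qed
  qed
qed

lemma sum_shift: "(\<Sum>e\<leftarrow>map (\<lambda>e. e + c) xs. (2::nat)^e) = 2^c * (\<Sum>e\<leftarrow>xs. 2^e)"
  by (induction xs) (auto simp: power_add algebra_simps)

lemma sum_upt_pow: "D \<le> z \<Longrightarrow> (\<Sum>i\<leftarrow>[D..<z]. (2::nat)^i) + 2^D = 2^z"
  by (induction z) (auto simp: le_Suc_eq)

lemma bin_digit_pow: "bin_digit r (2^e - 1) = (if r < e then 1 else 0)"
proof (cases "r < e")
  case True
  have "(2::nat)^e - 1 = 2^r * (2^(e-r) - 1) + (2^r - 1)"
  proof -
    have "(2::nat)^e = 2^r * 2^(e-r)" using True by (simp add: power_add[symmetric])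
    moreover have "(2::nat)^(e-r) \<ge> 1" "(2::nat)^r \<ge> 1" by simp_all
    ultimately show ?thesis by (simp add: algebra_simps diff_mult_distrib2)
  qed
  moreover have "(2::nat)^r - 1 < 2^r" by simp
  ultimately have "(2^e - 1) div 2^r = 2^(e-r) - (1::nat)"
    by (metis add.commute div_mult_self2 div_less add_0 power_not_zero zero_neq_numeral)
  moreover have "odd (2^(e-r) - (1::nat))" using True by simp
  hence "(2^(e-r) - (1::nat)) mod 2 = 1" by (metis odd_iff_mod_2_eq_one)
  ultimately show ?thesis using True unfolding bin_digit_def by simp
next
  case False
  hence "(2::nat)^e \<le> 2^r" by simp
  hence "(2::nat)^e - 1 < 2^r" by (metis diff_less le_less_trans one_le_numeral one_le_power zero_less_one less_le_trans le_neq_implies_less not_le)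
  thus ?thesis using False unfolding bin_digit_def by simp
qed

lemma sum_const1: "(\<forall>e\<in>set xs. f e = (1::nat)) \<Longrightarrow> sum_list (map f xs) = length xs"
  by (induction xs) auto

lemma sum_le1: "(\<forall>e\<in>set xs. f e \<le> (1::nat)) \<Longrightarrow> sum_list (map f xs) \<le> length xs"
  by (induction xs) auto

theorem proposition3:
  fixes k d :: nat
  assumes "k \<ge> 3" and "d > 0"
    and "int d > delta (k - 2)"
  shows "(\<forall>i. 1 \<le> i \<and> int i \<le> int d - delta (k - 2) \<longrightarrow>
            omega i (minimal_spike ((k - 2) * (2 ^ d - 1))) = k - 2)
       \<and> (\<forall>i. int i > int d - delta (k - 2) \<longrightarrow>
            omega i (minimal_spike ((k - 2) * (2 ^ d - 1))) < k - 2)"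
proof -
  define m where "m = k - 2"
  define n where "n = m * (2^d - 1)"
  have m1: "m \<ge> 1" using assms(1) m_def by simp
  obtain j q where oq: "odd q" and mq: "m = 2^j * q" using decomp[of m] m1 by auto
  obtain q' where q': "q = 2*q' + 1" using oq oddE by blast
  have zm: "zeta m = j" using zeta_char oq mq by simp
  have "alpha m = alpha q" using alpha_pow_mult mq by simp
  hence am: "alpha m = alpha q' + 1" using alpha_2[of 1 q'] q' by simp
  have aml: "alpha m \<le> m" by (rule alpha_le)
  define z where "z = j + d"
  define Dn where "Dn = nat (int d - delta m)"
  have dm: "delta m = int m - int (alpha m) - int j" unfolding delta_def zm by simp
  have Dpos: "Dn \<ge> 1" using assms(3) m_def Dn_def by simp
  have Dint: "int Dn = int d - delta m" using assms(3) m_def Dn_def by simp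
  have Dz: "Dn \<le> z" using Dint dm aml z_def by simp
  have zD: "z - Dn = m - alpha m" using Dint dm aml z_def Dz by simp
  have M: "m * 2^d = 2^z * q" using mq z_def by (simp add: power_add)
  have nM: "n + m = m * 2^d" unfolding n_def
    by (simp add: diff_mult_distrib2)
  define A where "A = rev (map (\<lambda>e. e + (z+1)) (bl q')) @ rev [Dn..<z]"
  define L where "L = A @ [Dn]"
  have bp: "(\<Sum>e\<leftarrow>bl q'. (2::nat)^e) = q' \<and> length (bl q') = alpha q' \<and> sorted_wrt (<) (bl q')"
    by (rule bl_props)
  have lenA: "length A = m - 1" unfolding A_def using bp zD am aml by simp
  have lenL: "length L = m" unfolding L_def using lenA m1 by simp
  have sumL: "(\<Sum>e\<leftarrow>L. (2::nat)^e) = m * 2^d"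
  proof -
    have "(\<Sum>e\<leftarrow>L. (2::nat)^e) = (\<Sum>e\<leftarrow>map (\<lambda>e. e + (z+1)) (bl q'). 2^e)
        + ((\<Sum>e\<leftarrow>[Dn..<z]. 2^e) + 2^Dn)"
      unfolding L_def A_def by (simp add: rev_map[symmetric] sum_list_rev)
    also have "\<dots> = 2^(z+1) * q' + 2^z" using sum_shift[of "z+1" "bl q'"] sum_upt_pow[OF Dz] bp by (simp only:)
    also have "\<dots> = 2^z * q" using q' by (simp add: algebra_simps)
    finally show ?thesis using M by simp
  qed
  have geD: "\<forall>e\<in>set L. e \<ge> Dn" unfolding L_def A_def using Dz by auto
  have geA: "\<forall>e\<in>set A. e \<ge> Dn" unfolding A_def using Dz by auto
  have sA: "sorted_wrt (>) A" unfolding A_def using bp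
    by (auto simp: sorted_wrt_append sorted_wrt_rev sorted_wrt_map)
  have nthcL: "nthc L"
    unfolding nthc_def
  proof (intro conjI allI impI)
    fix i assume "i + 2 < length L"
    hence "i + 1 < length A" unfolding L_def by simp
    hence "A ! i > A ! (i+1)" using sorted_wrt_nth_less[OF sA, of i "i+1"] by simp
    thus "L ! i > L ! (i+1)" unfolding L_def using \<open>i + 1 < length A\<close>
      by (simp add: nth_append)
  next
    assume "2 \<le> length L"
    hence "length A \<ge> 1" unfolding L_def by simp
    hence "L ! (length L - 2) = A ! (length A - 1)" "L ! (length L - 1) = Dn"
      unfolding L_def by (auto simp: nth_append)
    moreover have "A ! (length A - 1) \<in> set A" using \<open>length A \<ge> 1\<close> by simp
    ultimately show "L ! (length L - 2) \<ge> L ! (length L - 1)" using geA by simp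
  qed
  have sumL1: "(\<Sum>e\<leftarrow>L. 2^e - 1) = n" using sum_pow_minus[of L] lenL sumL nM by simp
  have posL: "\<forall>e\<in>set L. e > 0" using geD Dpos by fastforce
  have mu: "mu n = m"
    unfolding mu_def
  proof (rule Least_equality)
    show "\<exists>us::nat list. length us = m \<and> (\<forall>u\<in>set us. u > 0) \<and> (\<Sum>u\<leftarrow>us. 2 ^ u - 1) = n"
      using lenL posL sumL1 by blast
  next
    fix y assume "\<exists>us::nat list. length us = y \<and> (\<forall>u\<in>set us. u > 0) \<and> (\<Sum>u\<leftarrow>us. 2 ^ u - 1) = n"
    then obtain us :: "nat list" where us: "length us = y" "(\<Sum>u\<leftarrow>us. 2 ^ u - 1) = n" by blast
    show "m \<le> y"
    proof (rule ccontr)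
      assume "\<not> m \<le> y"
      hence ym: "y < m" by simp
      have "(\<Sum>u\<leftarrow>us. (2::nat)^u) = n + y" using sum_pow_minus[of us] us by simp
      hence a1: "alpha (n + y) \<le> y" using alpha_sum_pow[of us] us by simp
      have nt: "n + y = m * 2^d - (m - y)" using nM ym by simp
      have "m \<le> m * 2^d" by simp
      hence "alpha (m * 2^d - (m - y)) + (m - y) \<ge> alpha (m*2^d) + zeta (m*2^d)"
        using ym by (intro alpha_sub) linarith+
      moreover have "alpha (m*2^d) = alpha m"
      proof -
        have "alpha (m*2^d) = alpha q" unfolding M by (rule alpha_pow_mult)
        moreover have "alpha m = alpha q" unfolding mq by (rule alpha_pow_mult)
        ultimately show ?thesis by simp
      qed
      moreover have "zeta (m*2^d) = z" using M zeta_char oq by simp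
      ultimately have "alpha (n + y) + (m - y) \<ge> alpha m + z" using nt by simp
      moreover have "int d > int m - int (alpha m) - int j" using assms(3) dm m_def by simp
      ultimately show False using a1 z_def ym by linarith
    qed
  qed
  have se: "spike_exps n = L"
    unfolding spike_exps_def
  proof (rule the_equality)
    show "length L = mu n \<and> (\<forall>e\<in>set L. e > 0)
      \<and> (\<forall>i. i + 2 < length L \<longrightarrow> L ! i > L ! (i + 1))
      \<and> (2 \<le> length L \<longrightarrow> L ! (length L - 2) \<ge> L ! (length L - 1))
      \<and> (\<Sum>e\<leftarrow>L. 2 ^ e - 1) = n"
      using lenL mu posL nthcL sumL1 unfolding nthc_def by simp
  next
    fix es assume h: "length es = mu n \<and> (\<forall>e\<in>set es. e > 0)
      \<and> (\<forall>i. i + 2 < length es \<longrightarrow> es ! i > es ! (i + 1))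
      \<and> (2 \<le> length es \<longrightarrow> es ! (length es - 2) \<ge> es ! (length es - 1))
      \<and> (\<Sum>e\<leftarrow>es. 2 ^ e - 1) = n"
    have h1: "\<forall>i. i + 2 < length es \<longrightarrow> es ! i > es ! (i + 1)" using h by (rule conjunct1[OF conjunct2[OF conjunct2]])
    have h2: "2 \<le> length es \<longrightarrow> es ! (length es - 2) \<ge> es ! (length es - 1)"
      using h by (rule conjunct1[OF conjunct2[OF conjunct2[OF conjunct2]]])
    have "nthc es" unfolding nthc_def using h1 h2 by (rule conjI)
    hence "shp es" by (rule nthc_shp)
    moreover have "shp L" using nthcL by (rule nthc_shp)
    moreover have "length es = length L" using h mu lenL by simp
    moreover have "(\<Sum>e\<leftarrow>es. (2::nat)^e) = (\<Sum>e\<leftarrow>L. 2^e)"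
      using sum_pow_minus[of es] h mu sumL nM by simp
    ultimately show "es = L" by (rule shp_unique)
  qed
  have om: "omega i (minimal_spike n) = (\<Sum>e\<leftarrow>L. bin_digit (i - 1) (2^e - 1))" for i
    unfolding omega_def minimal_spike_def se by (simp add: o_def)
  show ?thesis
  proof (intro conjI allI impI)
    fix i assume "1 \<le> i \<and> int i \<le> int d - delta (k - 2)"
    hence "1 \<le> i" "i \<le> Dn" using Dint m_def by auto
    have "\<forall>e\<in>set L. bin_digit (i - 1) (2^e - 1) = 1"
    proof
      fix e assume "e \<in> set L"
      hence "i - 1 < e" using geD \<open>1 \<le> i\<close> \<open>i \<le> Dn\<close> by fastforce
      thus "bin_digit (i - 1) (2^e - 1) = 1" by (simp only: bin_digit_pow if_True)
    qed
    hence "(\<Sum>e\<leftarrow>L. bin_digit (i - 1) (2^e - 1)) = length L" by (rule sum_const1)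
    hence "omega i (minimal_spike n) = m" using om lenL by simp
    thus "omega i (minimal_spike ((k - 2) * (2 ^ d - 1))) = k - 2" using m_def n_def by simp
  next
    fix i assume "int i > int d - delta (k - 2)"
    hence "i > Dn" using Dint m_def by auto
    have "\<forall>e\<in>set A. bin_digit (i - 1) (2^e - 1) \<le> 1" using bin_digit_pow by simp
    hence "(\<Sum>e\<leftarrow>A. bin_digit (i - 1) (2^e - 1)) \<le> length A" by (rule sum_le1)
    hence "(\<Sum>e\<leftarrow>A. bin_digit (i - 1) (2^e - 1)) \<le> m - 1" using lenA by simp
    moreover have "bin_digit (i - 1) (2^Dn - 1) = 0" using bin_digit_pow \<open>i > Dn\<close> by simp
    ultimately have "omega i (minimal_spike n) < m" using om m1 unfolding L_def by simp
    thus "omega i (minimal_spike ((k - 2) * (2 ^ d - 1))) < k - 2" using m_def n_def by simp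
  qed
qed

end
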